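(* Let $q$ be a prime power and $n, r$ integers with $0 \le r \le \lfloor n/2\rfloor$. For all integers $0 \le u, s \le r$, the function $d \mapsto I_{\mathrm{C}}(u,s,d)$ is non-increasing on $\{0,1,\ldots,r\}$; that is, $I_{\mathrm{C}}(u,s,d) \le I_{\mathrm{C}}(u,s,d-1)$ for all $1 \le d \le r$.
   Context: $E_r(q,n)$ is the set of $r$-dimensional subspaces of $\mathrm{GF}(q)^n$, with injection distance $d_{\mathrm{I}}(U,V) = \dim(U+V) - \min\{\dim U,\dim V\}$. For $U \in E_r(q,n)$, $B_t(U) = \{V \in E_r(q,n) : d_{\mathrm{I}}(U,V) \le t\}$. For $0 \le u,s,d \le r$, $I_{\mathrm{C}}(u,s,d) = |B_u(U) \cap B_s(V)|$ for any $U,V \in E_r(q,n)$ with $d_{\mathrm{I}}(U,V) = d$ (this number depends only on $u,s,d$). *)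

theory Defs
  imports "HOL-Analysis.Analysis"
begin

text \<open>GF(q)^n is modelled as the type a^n with a a finite field
  (so q = CARD('a) is a prime power) and n = CARD('n).\<close>

definition Grass :: "nat \<Rightarrow> ('a::{field,finite} ^ 'n) set set" where
  "Grass r = {U. vec.subspace U \<and> vec.dim U = r}"

definition sub_sum :: "('a::field ^ 'n) set \<Rightarrow> ('a ^ 'n) set \<Rightarrow> ('a ^ 'n) set" where
  "sub_sum U V = {x + y | x y. x \<in> U \<and> y \<in> V}"

definition inj_dist :: "('a::field ^ 'n) set \<Rightarrow> ('a ^ 'n) set \<Rightarrow> nat" where
  "inj_dist U V = vec.dim (sub_sum U V) - min (vec.dim U) (vec.dim V)"

definition ball_I :: "nat \<Rightarrow> nat \<Rightarrow> ('a::{field,finite} ^ 'n) set \<Rightarrow> ('a ^ 'n) set set" where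
  "ball_I r t U = {V \<in> Grass r. inj_dist U V \<le> t}"

end

theory Submission
  imports Defs
begin


definition lfun :: "('a::field ^ 'n \<Rightarrow> 'a) \<Rightarrow> bool" where
  "lfun \<alpha> \<longleftrightarrow> (\<forall>x y. \<alpha> (x + y) = \<alpha> x + \<alpha> y) \<and> (\<forall>c x. \<alpha> (c *s x) = c * \<alpha> x)"

lemma lfun_add: "lfun \<alpha> \<Longrightarrow> \<alpha> (x + y) = \<alpha> x + \<alpha> y" by (simp add: lfun_def)
lemma lfun_scale: "lfun \<alpha> \<Longrightarrow> \<alpha> (c *s x) = c * \<alpha> x" by (simp add: lfun_def)
lemma lfun_zero: "lfun \<alpha> \<Longrightarrow> \<alpha> 0 = 0"
  using lfun_scale[of \<alpha> 0 0] by simp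
lemma lfun_neg: "lfun \<alpha> \<Longrightarrow> \<alpha> (- x) = - \<alpha> x"
  using lfun_scale[of \<alpha> "-1" x] by simp
lemma lfun_diff: "lfun \<alpha> \<Longrightarrow> \<alpha> (x - y) = \<alpha> x - \<alpha> y"
  using lfun_add[of \<alpha> x "-y"] lfun_neg[of \<alpha> y] by simp

lemma lfun_exists:
  fixes S :: "('a::field ^ 'n) set"
  assumes S: "vec.subspace S" and x: "x \<notin> S"
  shows "\<exists>\<alpha>. lfun \<alpha> \<and> (\<forall>v\<in>S. \<alpha> v = 0) \<and> \<alpha> x = 1"
proof -
  obtain B where B: "B \<subseteq> S" "vec.independent B" "S \<subseteq> vec.span B"
    by (rule vec.basis_exists)
  have spB: "vec.span B = S"
    by (rule subset_antisym[OF vec.span_minimal[OF B(1) S] B(3)])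
  have ind: "vec.independent (insert x B)"
    by (rule vec.independent_insertI) (use x spB B(2) in auto)
  obtain g where g: "Vector_Spaces.linear (*s) (*s) g"
    and gv: "\<forall>y\<in>insert x B. g y = (if y = x then (\<chi> i. 1) else 0)"
    using vec.linear_independent_extend[OF ind, of "\<lambda>y. if y = x then (\<chi> i. 1) else 0"] by (elim exE conjE)
  define \<alpha> where "\<alpha> = (\<lambda>v. g v $ undefined)"
  have "lfun \<alpha>"
    unfolding lfun_def \<alpha>_def
    by (simp add: vec.linear_add[OF g] vec.linear_scale[OF g])
  moreover have "\<forall>v\<in>S. \<alpha> v = 0"
  proof
    fix v assume "v \<in> S"
    then have v: "v \<in> vec.span B" using spB by simp
    have "\<And>y. y \<in> B \<Longrightarrow> g y = 0" using gv x B(1) by auto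
    then have "g v = 0" by (rule vec.linear_eq_0_on_span[OF g _ v])
    then show "\<alpha> v = 0" by (simp add: \<alpha>_def)
  qed
  moreover have "\<alpha> x = 1" using gv by (simp add: \<alpha>_def)
  ultimately show ?thesis by blast
qed

lemma subspace_ker:
  assumes "vec.subspace X" "lfun \<alpha>"
  shows "vec.subspace {x\<in>X. \<alpha> x = 0}"
proof -
  have "0 \<in> X" using assms(1) by (rule vec.subspace_0)
  moreover have "\<alpha> 0 = 0" using assms(2) by (rule lfun_zero)
  moreover have "\<forall>x\<in>{x\<in>X. \<alpha> x = 0}. \<forall>y\<in>{x\<in>X. \<alpha> x = 0}. x + y \<in> {x\<in>X. \<alpha> x = 0}"
    using assms by (simp add: lfun_add vec.subspace_add)
  moreover have "\<forall>c. \<forall>x\<in>{x\<in>X. \<alpha> x = 0}. c *s x \<in> {x\<in>X. \<alpha> x = 0}"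
    using assms by (simp add: lfun_scale vec.subspace_scale)
  ultimately show ?thesis unfolding vec.subspace_def by simp
qed

lemma dim_ker_bound:
  fixes X :: "('a::field ^ 'n) set"
  assumes X: "vec.subspace X" and a: "lfun \<alpha>"
  shows "vec.dim X \<le> vec.dim {x\<in>X. \<alpha> x = 0} + 1"
proof (cases "\<forall>x\<in>X. \<alpha> x = 0")
  case True
  then have "{x\<in>X. \<alpha> x = 0} = X" by auto
  then show ?thesis by simp
next
  case False
  then obtain w where w: "w \<in> X" "\<alpha> w \<noteq> 0" by auto
  let ?K = "{x\<in>X. \<alpha> x = 0}"
  have "X \<subseteq> vec.span (insert w ?K)"
  proof
    fix x assume x: "x \<in> X"
    let ?k = "\<alpha> x / \<alpha> w"
    have "x - ?k *s w \<in> ?K"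
    proof -
      have "x - ?k *s w \<in> X" using x w X by (simp add: vec.subspace_diff vec.subspace_scale)
      moreover have "\<alpha> (x - ?k *s w) = 0" using w a by (simp add: lfun_diff lfun_scale)
      ultimately show ?thesis by simp
    qed
    then have "x - ?k *s w \<in> vec.span ?K" by (rule vec.span_base)
    then show "x \<in> vec.span (insert w ?K)"
      by (subst vec.span_breakdown_eq) (rule exI)
  qed
  then have "vec.dim X \<le> vec.dim (insert w ?K)"
    by (metis vec.dim_span vec.dim_subset)
  also have "\<dots> \<le> vec.dim ?K + 1"
    by (simp add: vec.dim_insert)
  finally show ?thesis .
qed

lemma dim_insert_ge:
  fixes K :: "('a::field ^ 'n) set"
  assumes K: "vec.subspace K" and w: "w \<notin> K" and sub: "insert w K \<subseteq> Y"
  shows "vec.dim K + 1 \<le> vec.dim Y"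
proof -
  have "w \<notin> vec.span K" using K w by (metis vec.span_eq_iff)
  then have "vec.dim (insert w K) = vec.dim K + 1" by (simp add: vec.dim_insert)
  moreover have "vec.dim (insert w K) \<le> vec.dim Y" using sub by (rule vec.dim_subset)
  ultimately show ?thesis by simp
qed

lemma Grass_dim_Int_le:
  assumes "U \<in> Grass r"
  shows "vec.dim (U \<inter> W) \<le> r"
proof -
  have "vec.dim (U \<inter> W) \<le> vec.dim U" by (rule vec.dim_subset) auto
  then show ?thesis using assms by (simp add: Grass_def)
qed

lemma inj_dist_Grass:
  assumes U: "U \<in> Grass r" and W: "W \<in> Grass r"
  shows "inj_dist U W = r - vec.dim (U \<inter> W)"
proof -
  have "vec.dim (sub_sum U W) + vec.dim (U \<inter> W) = vec.dim U + vec.dim W"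
    unfolding sub_sum_def
    by (rule vec.dim_sums_Int) (use U W in \<open>simp_all add: Grass_def\<close>)
  then have "vec.dim (sub_sum U W) + vec.dim (U \<inter> W) = r + r"
    using U W by (simp add: Grass_def)
  then show ?thesis using U W by (simp add: inj_dist_def Grass_def)
qed

lemma ball_I_mem:
  assumes U: "U \<in> Grass r"
  shows "W \<in> ball_I r u U \<longleftrightarrow> W \<in> Grass r \<and> r - u \<le> vec.dim (U \<inter> W)"
proof -
  have "W \<in> Grass r \<Longrightarrow> (inj_dist U W \<le> u \<longleftrightarrow> r - u \<le> vec.dim (U \<inter> W))"
    using inj_dist_Grass[OF U] Grass_dim_Int_le[OF U, of W] by auto
  then show ?thesis by (auto simp: ball_I_def)
qed




lemma finite_setset: "finite (A :: ('a::{field,finite} ^ 'n) set set)"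
  by (rule finite_subset[OF subset_UNIV]) simp

lemma lin_img_Grass:
  fixes g :: "'a::{field,finite} ^ 'n \<Rightarrow> 'a ^ 'n"
  assumes g: "Vector_Spaces.linear (*s) (*s) g" and i: "inj g" and W: "W \<in> Grass r"
  shows "g ` W \<in> Grass r"
proof -
  have "vec.subspace (g ` W)" using W by (simp add: Grass_def vec.linear_subspace_image[OF g])
  moreover have "vec.dim (g ` W) = vec.dim W"
    by (rule vec.dim_image_eq[OF g]) (use i in \<open>simp add: inj_on_def inj_def\<close>)
  ultimately show ?thesis using W by (simp add: Grass_def)
qed

lemma lin_img_dim:
  fixes g :: "'a::{field,finite} ^ 'n \<Rightarrow> 'a ^ 'n"
  assumes g: "Vector_Spaces.linear (*s) (*s) g" and i: "inj g"
  shows "vec.dim (g ` W) = vec.dim W"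
  by (rule vec.dim_image_eq[OF g]) (use i in \<open>simp add: inj_on_def inj_def\<close>)

lemma card_transfer:
  fixes g :: "'a::{field,finite} ^ 'n \<Rightarrow> 'a ^ 'n"
  assumes g: "Vector_Spaces.linear (*s) (*s) g" and i: "inj g"
    and U1: "U1 \<in> Grass r" and V1: "V1 \<in> Grass r"
    and U2: "U2 \<in> Grass r" and V2: "V2 \<in> Grass r"
    and gU: "g ` U1 = U2" and gV: "g ` V1 = V2"
  shows "card (ball_I r u U1 \<inter> ball_I r s V1) \<le> card (ball_I r u U2 \<inter> ball_I r s V2)"
proof (rule card_inj_on_le[of "\<lambda>W. g ` W"])
  show "inj_on ((`) g) (ball_I r u U1 \<inter> ball_I r s V1)"
    using i by (simp add: inj_on_def inj_image_eq_iff)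
  show "finite (ball_I r u U2 \<inter> ball_I r s V2)" by (rule finite_setset)
  show "(`) g ` (ball_I r u U1 \<inter> ball_I r s V1) \<subseteq> ball_I r u U2 \<inter> ball_I r s V2"
  proof
    fix X assume "X \<in> (`) g ` (ball_I r u U1 \<inter> ball_I r s V1)"
    then obtain W where X: "X = g ` W" and W: "W \<in> ball_I r u U1" "W \<in> ball_I r s V1" by auto
    have WG: "W \<in> Grass r" and Wu: "r - u \<le> vec.dim (U1 \<inter> W)" and Ws: "r - s \<le> vec.dim (V1 \<inter> W)"
      using W ball_I_mem[OF U1] ball_I_mem[OF V1] by auto
    have XG: "X \<in> Grass r" using lin_img_Grass[OF g i WG] X by simp
    have "U2 \<inter> X = g ` (U1 \<inter> W)" using gU X i by (simp add: image_Int)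
    then have "vec.dim (U2 \<inter> X) = vec.dim (U1 \<inter> W)" using lin_img_dim[OF g i] by simp
    moreover have "V2 \<inter> X = g ` (V1 \<inter> W)" using gV X i by (simp add: image_Int)
    then have "vec.dim (V2 \<inter> X) = vec.dim (V1 \<inter> W)" using lin_img_dim[OF g i] by simp
    ultimately show "X \<in> ball_I r u U2 \<inter> ball_I r s V2"
      using XG Wu Ws ball_I_mem[OF U2] ball_I_mem[OF V2] by simp
  qed
qed


lemma pair_basis:
  fixes U V :: "('a::{field,finite} ^ 'n) set"
  assumes U: "U \<in> Grass r" and V: "V \<in> Grass r"
  obtains BC BU BV where "BC \<subseteq> BU" "BC \<subseteq> BV" "BU \<inter> BV = BC"
    "vec.span BU = U" "vec.span BV = V" "vec.independent (BU \<union> BV)"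
    "card BC = vec.dim (U \<inter> V)" "card BU = r" "card BV = r" "finite BU" "finite BV"
proof -
  have sU: "vec.subspace U" and sV: "vec.subspace V" and dU: "vec.dim U = r" and dV: "vec.dim V = r"
    using U V by (auto simp: Grass_def)
  obtain BC where BC: "BC \<subseteq> U \<inter> V" "vec.independent BC" "U \<inter> V \<subseteq> vec.span BC" "card BC = vec.dim (U \<inter> V)"
    by (rule vec.basis_exists)
  obtain BU where BU: "BC \<subseteq> BU" "BU \<subseteq> U" "vec.independent BU" "U \<subseteq> vec.span BU"
    by (rule vec.maximal_independent_subset_extend[of BC U]) (use BC in auto)
  obtain BV where BV: "BC \<subseteq> BV" "BV \<subseteq> V" "vec.independent BV" "V \<subseteq> vec.span BV"
    by (rule vec.maximal_independent_subset_extend[of BC V]) (use BC in auto)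
  have spU: "vec.span BU = U" by (rule subset_antisym[OF vec.span_minimal[OF BU(2) sU] BU(4)])
  have spV: "vec.span BV = V" by (rule subset_antisym[OF vec.span_minimal[OF BV(2) sV] BV(4)])
  have cU: "card BU = r" using vec.dim_span_eq_card_independent[OF BU(3)] spU dU by simp
  have cV: "card BV = r" using vec.dim_span_eq_card_independent[OF BV(3)] spV dV by simp
  have fU: "finite BU" using BU(3) by (rule vec.finiteI_independent)
  have fV: "finite BV" using BV(3) by (rule vec.finiteI_independent)
  have int: "BU \<inter> BV = BC"
  proof (rule subset_antisym)
    show "BU \<inter> BV \<subseteq> BC"
    proof
      fix x assume x: "x \<in> BU \<inter> BV"
      show "x \<in> BC"
      proof (rule ccontr)
        assume nx: "x \<notin> BC"
        have "x \<in> U \<inter> V" using x BU(2) BV(2) by auto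
        then have "x \<in> vec.span BC" using BC(3) by auto
        moreover have "vec.span BC \<subseteq> vec.span (BU - {x})"
          by (rule vec.span_mono) (use BU(1) nx in auto)
        ultimately have "vec.dependent BU" unfolding vec.dependent_def using x by auto
        then show False using BU(3) by simp
      qed
    qed
  qed (use BU(1) BV(1) in auto)
  have fC: "finite BC" using fU BU(1) by (rule finite_subset[rotated])
  have ind: "vec.independent (BU \<union> BV)"
  proof (rule vec.card_le_dim_spanning[of _ "sub_sum U V"])
    show "BU \<union> BV \<subseteq> sub_sum U V"
    proof
      fix x assume "x \<in> BU \<union> BV"
      then show "x \<in> sub_sum U V"
      proof
        assume "x \<in> BU" then have "x \<in> U" using BU(2) by auto
        then show ?thesis unfolding sub_sum_def using vec.subspace_0[OF sV]
          by (intro CollectI exI[of _ x] exI[of _ 0]) simp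
      next
        assume "x \<in> BV" then have "x \<in> V" using BV(2) by auto
        then show ?thesis unfolding sub_sum_def using vec.subspace_0[OF sU]
          by (intro CollectI exI[of _ 0] exI[of _ x]) simp
      qed
    qed
    show "sub_sum U V \<subseteq> vec.span (BU \<union> BV)"
      unfolding vec.span_Un sub_sum_def spU spV by simp
    show "finite (BU \<union> BV)" using fU fV by simp
    have "vec.dim (sub_sum U V) + vec.dim (U \<inter> V) = vec.dim U + vec.dim V"
      unfolding sub_sum_def by (rule vec.dim_sums_Int[OF sU sV])
    moreover have "card (BU \<union> BV) + card (BU \<inter> BV) = card BU + card BV"
      using card_Un_Int[OF fU fV] by simp
    ultimately show "card (BU \<union> BV) \<le> vec.dim (sub_sum U V)"
      using int BC(4) cU cV dU dV by simp
  qed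
  show ?thesis by (rule that[OF BU(1) BV(1) int spU spV ind BC(4) cU cV fU fV])
qed


lemma transfer_g:
  fixes U1 V1 U2 V2 :: "('a::{field,finite} ^ 'n) set"
  assumes U1: "U1 \<in> Grass r" and V1: "V1 \<in> Grass r"
    and U2: "U2 \<in> Grass r" and V2: "V2 \<in> Grass r"
    and eq: "vec.dim (U1 \<inter> V1) = vec.dim (U2 \<inter> V2)"
  obtains g where "Vector_Spaces.linear (*s) (*s) g" "inj g" "g ` U1 = U2" "g ` V1 = V2"
proof -
  obtain C1 A1 B1 where P1: "C1 \<subseteq> A1" "C1 \<subseteq> B1" "A1 \<inter> B1 = C1"
    "vec.span A1 = U1" "vec.span B1 = V1" "vec.independent (A1 \<union> B1)"
    "card C1 = vec.dim (U1 \<inter> V1)" "card A1 = r" "card B1 = r" "finite A1" "finite B1"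
    by (rule pair_basis[OF U1 V1])
  obtain C2 A2 B2 where P2: "C2 \<subseteq> A2" "C2 \<subseteq> B2" "A2 \<inter> B2 = C2"
    "vec.span A2 = U2" "vec.span B2 = V2" "vec.independent (A2 \<union> B2)"
    "card C2 = vec.dim (U2 \<inter> V2)" "card A2 = r" "card B2 = r" "finite A2" "finite B2"
    by (rule pair_basis[OF U2 V2])
  have fC1: "finite C1" using P1(1,10) finite_subset by blast
  have fC2: "finite C2" using P2(1,10) finite_subset by blast
  obtain f1 where f1: "bij_betw f1 C1 C2"
    using finite_same_card_bij[OF fC1 fC2] P1(7) P2(7) eq by auto
  obtain f2 where f2: "bij_betw f2 (A1 - C1) (A2 - C2)"
    using finite_same_card_bij[of "A1 - C1" "A2 - C2"] P1 P2 fC1 fC2 eq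
    by (auto simp: card_Diff_subset)
  obtain f3 where f3: "bij_betw f3 (B1 - C1) (B2 - C2)"
    using finite_same_card_bij[of "B1 - C1" "B2 - C2"] P1 P2 fC1 fC2 eq
    by (auto simp: card_Diff_subset)
  define f where "f x = (if x \<in> C1 then f1 x else if x \<in> A1 then f2 x else f3 x)" for x
  have b1: "bij_betw f C1 C2"
    using f1 by (subst bij_betw_cong[of _ f f1]) (auto simp: f_def)
  have b2: "bij_betw f (A1 - C1) (A2 - C2)"
    using f2 by (subst bij_betw_cong[of _ f f2]) (auto simp: f_def)
  have b3: "bij_betw f (B1 - C1) (B2 - C2)"
  proof (subst bij_betw_cong[of _ f f3])
    fix x assume "x \<in> B1 - C1"
    then have "x \<notin> A1" "x \<notin> C1" using P1(3) by auto
    then show "f x = f3 x" by (simp add: f_def)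
  qed (rule f3)
  have bA: "bij_betw f (C1 \<union> (A1 - C1)) (C2 \<union> (A2 - C2))"
    by (rule bij_betw_combine[OF b1 b2]) auto
  have bAB: "bij_betw f ((C1 \<union> (A1 - C1)) \<union> (B1 - C1)) ((C2 \<union> (A2 - C2)) \<union> (B2 - C2))"
    by (rule bij_betw_combine[OF bA b3]) (use P2(3) in auto)
  have e1: "(C1 \<union> (A1 - C1)) \<union> (B1 - C1) = A1 \<union> B1" using P1(1,2) by auto
  have e2: "(C2 \<union> (A2 - C2)) \<union> (B2 - C2) = A2 \<union> B2" using P2(1,2) by auto
  have bij: "bij_betw f (A1 \<union> B1) (A2 \<union> B2)" using bAB e1 e2 by simp
  have fA: "f ` A1 = A2"
  proof -
    have "f ` A1 = f ` (C1 \<union> (A1 - C1))" using P1(1) by (simp add: Un_absorb1 Un_Diff_cancel)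
    also have "\<dots> = C2 \<union> (A2 - C2)" using bA by (simp add: bij_betw_def)
    also have "\<dots> = A2" using P2(1) by auto
    finally show ?thesis .
  qed
  have fB: "f ` B1 = B2"
  proof -
    have "f ` B1 = f ` (C1 \<union> (B1 - C1))" using P1(2) by (simp add: Un_absorb1 Un_Diff_cancel)
    also have "\<dots> = f ` C1 \<union> f ` (B1 - C1)" by (rule image_Un)
    also have "\<dots> = C2 \<union> (B2 - C2)" using b1 b3 by (simp add: bij_betw_def)
    also have "\<dots> = B2" using P2(2) by auto
    finally show ?thesis .
  qed
  obtain g where g: "Vector_Spaces.linear (*s) (*s) g" "inj g" "\<forall>x\<in>A1 \<union> B1. g x = f x"
    using vec.linear_independent_extend_inj[of "A1 \<union> B1" f] P1(6) P2(6) bij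
    by (auto simp: bij_betw_def)
  have gA: "g ` A1 = A2" using g(3) fA by (metis (no_types, lifting) UnCI image_cong)
  have gB: "g ` B1 = B2" using g(3) fB by (metis (no_types, lifting) UnCI image_cong)
  have "g ` U1 = U2"
    using vec.linear_span_image[OF g(1), of A1] P1(4) P2(4) gA by simp
  moreover have "g ` V1 = V2"
    using vec.linear_span_image[OF g(1), of B1] P1(5) P2(5) gB by simp
  ultimately show ?thesis using that g(1,2) by blast
qed

lemma card_same_dist:
  fixes U1 V1 U2 V2 :: "('a::{field,finite} ^ 'n) set"
  assumes U1: "U1 \<in> Grass r" and V1: "V1 \<in> Grass r"
    and U2: "U2 \<in> Grass r" and V2: "V2 \<in> Grass r"
    and eq: "vec.dim (U1 \<inter> V1) = vec.dim (U2 \<inter> V2)"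
  shows "card (ball_I r u U1 \<inter> ball_I r s V1) \<le> card (ball_I r u U2 \<inter> ball_I r s V2)"
proof -
  obtain g where "Vector_Spaces.linear (*s) (*s) g" "inj g" "g ` U1 = U2" "g ` V1 = V2"
    by (rule transfer_g[OF U1 V1 U2 V2 eq])
  then show ?thesis by (intro card_transfer[OF _ _ U1 V1 U2 V2])
qed




lemma sub_sum_span:
  assumes "vec.subspace A" "vec.subspace B"
  shows "sub_sum A B = vec.span (A \<union> B)"
  unfolding vec.span_Un sub_sum_def using assms by (simp add: vec.span_eq_iff[THEN iffD2])

lemma subspace_sub_sum:
  assumes "vec.subspace A" "vec.subspace B"
  shows "vec.subspace (sub_sum A B)"
  using sub_sum_span[OF assms] by simp

lemma sub_sum_memI:
  "x \<in> A \<Longrightarrow> y \<in> B \<Longrightarrow> x + y \<in> sub_sum A B"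
  unfolding sub_sum_def by blast

lemma sub_sum_memE:
  assumes "v \<in> sub_sum A B"
  obtains x y where "x \<in> A" "y \<in> B" "v = x + y"
  using assms unfolding sub_sum_def by blast

lemma sub_sum_left:
  assumes "vec.subspace B" "x \<in> A" shows "x \<in> sub_sum A B"
  using sub_sum_memI[OF assms(2) vec.subspace_0[OF assms(1)]] by simp

lemma sub_sum_right:
  assumes "vec.subspace A" "y \<in> B" shows "y \<in> sub_sum A B"
  using sub_sum_memI[OF vec.subspace_0[OF assms(1)] assms(2)] by simp

lemma complement_exists:
  fixes I A :: "('a::field ^ 'n) set"
  assumes I: "vec.subspace I" and A: "vec.subspace A" and IA: "I \<subseteq> A"
  shows "\<exists>A'. vec.subspace A' \<and> A' \<subseteq> A \<and> A' \<inter> I \<subseteq> {0} \<and> (\<forall>x\<in>A. \<exists>y\<in>A'. x - y \<in> I)"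
proof -
  obtain BI where BI: "BI \<subseteq> I" "vec.independent BI" "I \<subseteq> vec.span BI"
    by (rule vec.basis_exists)
  obtain BA where BA: "BI \<subseteq> BA" "BA \<subseteq> A" "vec.independent BA" "A \<subseteq> vec.span BA"
    by (rule vec.maximal_independent_subset_extend[of BI A]) (use BI IA in auto)
  have spI: "vec.span BI = I" by (rule subset_antisym[OF vec.span_minimal[OF BI(1) I] BI(3)])
  define A' where "A' = vec.span (BA - BI)"
  have "vec.subspace A'" by (simp add: A'_def)
  moreover have "A' \<subseteq> A" unfolding A'_def
    by (rule vec.span_minimal) (use BA(2) A in auto)
  moreover have "A' \<inter> I \<subseteq> {0}"
  proof -
    have fBA: "finite BA" using BA(3) by (rule vec.finiteI_independent)
    have iD: "vec.independent (BA - BI)" using BA(3) by (rule vec.independent_mono) auto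
    have dA': "vec.dim A' = card (BA - BI)" unfolding A'_def by (rule vec.dim_span_eq_card_independent[OF iD])
    have dI: "vec.dim I = card BI" using vec.dim_span_eq_card_independent[OF BI(2)] spI by simp
    have spA: "vec.span BA = A" by (rule subset_antisym[OF vec.span_minimal[OF BA(2) A] BA(4)])
    have dA: "vec.dim A = card BA" using vec.dim_span_eq_card_independent[OF BA(3)] spA by simp
    have "sub_sum A' I = vec.span (BA - BI \<union> BI)"
      unfolding sub_sum_def A'_def vec.span_Un spI[symmetric] by simp
    also have "\<dots> = A" using BA(1) spA by (simp add: Un_absorb2 Un_Diff_cancel2)
    finally have ss: "sub_sum A' I = A" .
    have "vec.dim (sub_sum A' I) + vec.dim (A' \<inter> I) = vec.dim A' + vec.dim I"
      unfolding sub_sum_def by (rule vec.dim_sums_Int) (simp_all add: A'_def I)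
    moreover have "card BA = card (BA - BI) + card BI"
      using card_Diff_subset[OF finite_subset[OF BA(1) fBA] BA(1)] card_mono[OF fBA BA(1)] by simp
    ultimately have "vec.dim (A' \<inter> I) = 0" using ss dA' dI dA by simp
    then show ?thesis by simp
  qed
  moreover have "\<forall>x\<in>A. \<exists>y\<in>A'. x - y \<in> I"
  proof
    fix x assume "x \<in> A"
    then have "x \<in> vec.span ((BA - BI) \<union> BI)" using BA(4) BA(1) by (auto simp: Un_absorb2 Un_Diff_cancel2)
    then obtain y i where "y \<in> vec.span (BA - BI)" "i \<in> vec.span BI" "x = y + i"
      unfolding vec.span_Un by blast
    then show "\<exists>y\<in>A'. x - y \<in> I" using spI by (auto simp: A'_def)
  qed
  ultimately show ?thesis by blast
qed




locale cfg =
  fixes U V :: "('a::{field,finite} ^ 'n) set" and r :: nat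
    and \<alpha> \<beta> :: "'a ^ 'n \<Rightarrow> 'a" and a1 b1 :: "'a ^ 'n"
  assumes UG: "U \<in> Grass r" and VG: "V \<in> Grass r"
    and la: "lfun \<alpha>" and lb: "lfun \<beta>"
    and a1U: "a1 \<in> U" and b1V: "b1 \<in> V"
    and aV: "\<forall>v\<in>V. \<alpha> v = 0" and bU: "\<forall>v\<in>U. \<beta> v = 0"
    and aa: "\<alpha> a1 = 1" and bb: "\<beta> b1 = 1"
begin

definition "M = {v\<in>U. \<alpha> v = 0}"
definition "H = {v\<in>V. \<beta> v = 0}"
definition "G = {v. \<alpha> v = 0 \<and> \<beta> v = 0}"
definition "V' = vec.span (insert a1 H)"
definition "\<sigma> v = v + (\<beta> v - \<alpha> v) *s a1 + (\<alpha> v - \<beta> v) *s b1"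
definition "\<tau> z v = v + (\<beta> v - \<alpha> v) *s z"

lemma sU: "vec.subspace U" using UG by (simp add: Grass_def)
lemma sV: "vec.subspace V" using VG by (simp add: Grass_def)
lemma dU: "vec.dim U = r" using UG by (simp add: Grass_def)
lemma dV: "vec.dim V = r" using VG by (simp add: Grass_def)

lemma sM: "vec.subspace M" unfolding M_def by (rule subspace_ker[OF sU la])
lemma sH: "vec.subspace H" unfolding H_def by (rule subspace_ker[OF sV lb])
lemma sG: "vec.subspace G"
proof -
  have "vec.subspace {x\<in>{x\<in>UNIV. \<alpha> x = 0}. \<beta> x = 0}"
    by (rule subspace_ker[OF subspace_ker[OF vec.subspace_UNIV la] lb])
  moreover have "{x\<in>{x\<in>UNIV. \<alpha> x = 0}. \<beta> x = 0} = G" by (auto simp: G_def)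
  ultimately show ?thesis by simp
qed
lemma sV': "vec.subspace V'" by (simp add: V'_def)

lemma ab_a1: "\<beta> a1 = 0" using bU a1U by simp
lemma ab_b1: "\<alpha> b1 = 0" using aV b1V by simp

lemma M_G: "M \<subseteq> G" using bU by (auto simp: M_def G_def)
lemma H_G: "H \<subseteq> G" using aV by (auto simp: H_def G_def)
lemma M_U: "M \<subseteq> U" by (auto simp: M_def)
lemma H_V: "H \<subseteq> V" by (auto simp: H_def)
lemma G_iff: "v \<in> G \<longleftrightarrow> \<alpha> v = 0 \<and> \<beta> v = 0" by (simp add: G_def)

lemma V'_mem: "x \<in> V' \<longleftrightarrow> (\<exists>k. x - k *s a1 \<in> H)"
  unfolding V'_def using vec.span_breakdown_eq[of x a1 H] sH by (simp add: vec.span_eq_iff[THEN iffD2])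

lemma H_V': "H \<subseteq> V'" unfolding V'_def by (meson subset_insertI vec.span_superset order_trans)
lemma a1_V': "a1 \<in> V'" unfolding V'_def by (simp add: vec.span_base)

lemma a1_notin_H: "a1 \<notin> H" using H_G aa by (auto simp: G_def)
lemma b1_notin_H: "b1 \<notin> H" using bb by (auto simp: H_def)
lemma a1_notin_M: "a1 \<notin> M" using aa by (auto simp: M_def)

lemma dH: "vec.dim H + 1 = r"
proof -
  have "vec.dim V \<le> vec.dim H + 1" unfolding H_def by (rule dim_ker_bound[OF sV lb])
  moreover have "vec.dim H + 1 \<le> vec.dim V"
    by (rule dim_insert_ge[OF sH b1_notin_H]) (use b1V H_V in auto)
  ultimately show ?thesis using dV by simp
qed

lemma dV': "vec.dim V' = r"
proof -
  have "a1 \<notin> vec.span H" using sH a1_notin_H by (simp add: vec.span_eq_iff[THEN iffD2])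
  then have "vec.dim (insert a1 H) = vec.dim H + 1" by (simp add: vec.dim_insert)
  then show ?thesis using dH by (simp add: V'_def)
qed

lemma V'G: "V' \<in> Grass r" using sV' dV' by (simp add: Grass_def)

lemma dim_UV': "vec.dim (U \<inter> V') = vec.dim (U \<inter> V) + 1"
proof -
  have sUV: "vec.subspace (U \<inter> V)" by (rule vec.subspace_inter[OF sU sV])
  have "vec.dim (U \<inter> V) + 1 \<le> vec.dim (U \<inter> V')"
  proof (rule dim_insert_ge[OF sUV])
    show "a1 \<notin> U \<inter> V" using aV aa by auto
    have "U \<inter> V \<subseteq> H" using bU by (auto simp: H_def)
    then show "insert a1 (U \<inter> V) \<subseteq> U \<inter> V'" using a1U a1_V' H_V' by auto
  qed
  moreover have "vec.dim (U \<inter> V') \<le> vec.dim {x\<in>U \<inter> V'. \<alpha> x = 0} + 1"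
    by (rule dim_ker_bound[OF vec.subspace_inter[OF sU sV'] la])
  moreover have "{x\<in>U \<inter> V'. \<alpha> x = 0} \<subseteq> U \<inter> V"
  proof
    fix x assume x: "x \<in> {x\<in>U \<inter> V'. \<alpha> x = 0}"
    then obtain k where k: "x - k *s a1 \<in> H" using V'_mem by auto
    have "\<alpha> (x - k *s a1) = 0" using k H_G by (auto simp: G_def)
    then have "k = 0" using x aa la by (simp add: lfun_diff lfun_scale)
    then show "x \<in> U \<inter> V" using k x H_V by auto
  qed
  then have "vec.dim {x\<in>U \<inter> V'. \<alpha> x = 0} \<le> vec.dim (U \<inter> V)" by (rule vec.dim_subset)
  ultimately show ?thesis by simp
qed


lemma linI:
  fixes f :: "'a ^ 'n \<Rightarrow> 'a ^ 'n"
  assumes "\<And>x y. f (x + y) = f x + f y" "\<And>c x. f (c *s x) = c *s f x"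
  shows "Vector_Spaces.linear (*s) (*s) f"
  unfolding Vector_Spaces.linear_iff using assms vec.vector_space_axioms by blast

lemmas la_add = lfun_add[OF la] and la_scale = lfun_scale[OF la] and la_diff = lfun_diff[OF la]
lemmas lb_add = lfun_add[OF lb] and lb_scale = lfun_scale[OF lb] and lb_diff = lfun_diff[OF lb]

lemma alpha_sigma: "\<alpha> (\<sigma> v) = \<beta> v"
  by (simp add: \<sigma>_def la_add la_diff la_scale aa ab_b1)
lemma beta_sigma: "\<beta> (\<sigma> v) = \<alpha> v"
  by (simp add: \<sigma>_def lb_add lb_diff lb_scale bb ab_a1)
lemma sigma_sigma: "\<sigma> (\<sigma> v) = v"
proof -
  have "\<sigma> (\<sigma> v) = \<sigma> v + (\<alpha> v - \<beta> v) *s a1 + (\<beta> v - \<alpha> v) *s b1"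
    by (simp add: \<sigma>_def[of "\<sigma> v"] alpha_sigma beta_sigma)
  also have "\<dots> = v" unfolding \<sigma>_def
    by (simp add: vec.scale_left_diff_distrib)
  finally show ?thesis .
qed
lemma sigma_G: "v \<in> G \<Longrightarrow> \<sigma> v = v"
  by (simp add: \<sigma>_def G_def)
lemma lin_sigma: "Vector_Spaces.linear (*s) (*s) \<sigma>"
proof (rule linI)
  fix x y show "\<sigma> (x + y) = \<sigma> x + \<sigma> y"
    unfolding \<sigma>_def la_add lb_add
    by (simp add: vec.scale_left_distrib vec.scale_left_diff_distrib algebra_simps)
next
  fix c x show "\<sigma> (c *s x) = c *s \<sigma> x"
    unfolding \<sigma>_def la_scale lb_scale
    by (simp add: vec.scale_right_distrib vec.scale_right_diff_distrib vec.scale_left_diff_distrib vec.scale_scale algebra_simps)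
qed
lemma inj_sigma: "inj \<sigma>"
  by (rule injI) (metis sigma_sigma)
lemma sigma_a1: "\<sigma> a1 = b1"
  by (simp add: \<sigma>_def aa ab_a1)
lemma sigma_V': "\<sigma> ` V' = V"
proof -
  have "\<sigma> ` V' = vec.span (\<sigma> ` insert a1 H)"
    unfolding V'_def by (rule vec.linear_span_image[OF lin_sigma, symmetric])
  also have "\<sigma> ` insert a1 H = insert b1 H"
  proof -
    have "\<sigma> ` H = H"
    proof -
      have "\<sigma> ` H = id ` H" by (rule image_cong) (use sigma_G H_G in auto)
      then show ?thesis by simp
    qed
    then show ?thesis using sigma_a1 by simp
  qed
  also have "vec.span (insert b1 H) = V"
  proof (rule subset_antisym)
    show "vec.span (insert b1 H) \<subseteq> V"
      by (rule vec.span_minimal[OF _ sV]) (use b1V H_V in auto)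
    show "V \<subseteq> vec.span (insert b1 H)"
    proof
      fix v assume v: "v \<in> V"
      have "v - \<beta> v *s b1 \<in> H"
        using v aV b1V bb ab_b1 by (simp add: H_def vec.subspace_diff[OF sV] vec.subspace_scale[OF sV] lb_diff lb_scale)
      then have "v - \<beta> v *s b1 \<in> vec.span H" by (rule vec.span_base)
      then show "v \<in> vec.span (insert b1 H)" by (subst vec.span_breakdown_eq) (rule exI)
    qed
  qed
  finally show ?thesis .
qed
lemma sigma_V: "\<sigma> ` V = V'"
proof -
  have "\<sigma> ` V = \<sigma> ` \<sigma> ` V'" using sigma_V' by simp
  also have "\<dots> = V'" by (simp add: image_comp comp_def sigma_sigma)
  finally show ?thesis .
qed

lemma alpha_tau: "z \<in> G \<Longrightarrow> \<alpha> (\<tau> z v) = \<alpha> v"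
  by (simp add: \<tau>_def la_add la_diff la_scale G_def)
lemma beta_tau: "z \<in> G \<Longrightarrow> \<beta> (\<tau> z v) = \<beta> v"
  by (simp add: \<tau>_def lb_add lb_diff lb_scale G_def)
lemma tau_G: "v \<in> G \<Longrightarrow> \<tau> z v = v"
  by (simp add: \<tau>_def G_def)
lemma tau_inv: "z \<in> G \<Longrightarrow> \<tau> (- z) (\<tau> z v) = v"
  unfolding \<tau>_def[of "- z" "\<tau> z v"] by (simp add: alpha_tau beta_tau) (simp add: \<tau>_def)
lemma lin_tau: "Vector_Spaces.linear (*s) (*s) (\<tau> z)"
proof (rule linI)
  fix x y show "\<tau> z (x + y) = \<tau> z x + \<tau> z y"
    unfolding \<tau>_def la_add lb_add
    by (simp add: vec.scale_left_distrib vec.scale_left_diff_distrib algebra_simps)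
next
  fix c x show "\<tau> z (c *s x) = c *s \<tau> z x"
    unfolding \<tau>_def la_scale lb_scale
    by (simp add: vec.scale_right_distrib vec.scale_right_diff_distrib vec.scale_left_diff_distrib vec.scale_scale algebra_simps)
qed
lemma inj_tau: "z \<in> G \<Longrightarrow> inj (\<tau> z)"
  by (rule injI) (metis tau_inv)
lemma tau_img_inv: "z \<in> G \<Longrightarrow> \<tau> (- z) ` (\<tau> z ` W) = W"
  by (simp add: image_comp comp_def tau_inv)
lemma tau_img_G: "z \<in> G \<Longrightarrow> \<tau> z ` W \<inter> G = W \<inter> G"
proof (intro set_eqI iffI)
  fix x assume z: "z \<in> G" and x: "x \<in> \<tau> z ` W \<inter> G"
  then obtain v where v: "v \<in> W" "x = \<tau> z v" by auto
  then have "v \<in> G" using x z alpha_tau beta_tau by (simp add: G_def)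
  then show "x \<in> W \<inter> G" using v tau_G by simp
next
  fix x assume "z \<in> G" and x: "x \<in> W \<inter> G"
  then show "x \<in> \<tau> z ` W \<inter> G" using tau_G[of x z] by (auto intro: image_eqI[of x _ x])
qed

end



context cfg begin

definition "Astar D = sub_sum M D"
definition "Bstar D = sub_sum H D"
definition "Istar D = Astar D \<inter> Bstar D"
definition "Acomp D = (SOME A'. vec.subspace A' \<and> A' \<subseteq> Astar D \<and> A' \<inter> Istar D \<subseteq> {0}
    \<and> (\<forall>x\<in>Astar D. \<exists>y\<in>A'. x - y \<in> Istar D))"

lemma star_props:
  assumes D: "vec.subspace D" "D \<subseteq> G"
  shows "vec.subspace (Astar D)" "vec.subspace (Bstar D)" "vec.subspace (Istar D)"
    "Istar D \<subseteq> Astar D" "Istar D \<subseteq> Bstar D" "Astar D \<subseteq> G" "Bstar D \<subseteq> G"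
    "M \<subseteq> Astar D" "H \<subseteq> Bstar D" "D \<subseteq> Astar D" "D \<subseteq> Bstar D"
proof -
  show sA: "vec.subspace (Astar D)" unfolding Astar_def by (rule subspace_sub_sum[OF sM D(1)])
  show sB: "vec.subspace (Bstar D)" unfolding Bstar_def by (rule subspace_sub_sum[OF sH D(1)])
  show "vec.subspace (Istar D)" unfolding Istar_def by (rule vec.subspace_inter[OF sA sB])
  show "Istar D \<subseteq> Astar D" "Istar D \<subseteq> Bstar D" by (auto simp: Istar_def)
  show "Astar D \<subseteq> G"
  proof
    fix x assume "x \<in> Astar D"
    then obtain m d where "m \<in> M" "d \<in> D" "x = m + d" unfolding Astar_def by (rule sub_sum_memE)
    then show "x \<in> G" using M_G D(2) vec.subspace_add[OF sG] by auto
  qed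
  show "Bstar D \<subseteq> G"
  proof
    fix x assume "x \<in> Bstar D"
    then obtain m d where "m \<in> H" "d \<in> D" "x = m + d" unfolding Bstar_def by (rule sub_sum_memE)
    then show "x \<in> G" using H_G D(2) vec.subspace_add[OF sG] by auto
  qed
  show "M \<subseteq> Astar D" unfolding Astar_def using sub_sum_left[OF D(1)] by blast
  show "H \<subseteq> Bstar D" unfolding Bstar_def using sub_sum_left[OF D(1)] by blast
  show "D \<subseteq> Astar D" unfolding Astar_def using sub_sum_right[OF sM] by blast
  show "D \<subseteq> Bstar D" unfolding Bstar_def using sub_sum_right[OF sH] by blast
qed

lemma Acomp_spec:
  assumes D: "vec.subspace D" "D \<subseteq> G"
  shows "vec.subspace (Acomp D) \<and> Acomp D \<subseteq> Astar D \<and> Acomp D \<inter> Istar D \<subseteq> {0}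
    \<and> (\<forall>x\<in>Astar D. \<exists>y\<in>Acomp D. x - y \<in> Istar D)"
proof -
  have "\<exists>A'. vec.subspace A' \<and> A' \<subseteq> Astar D \<and> A' \<inter> Istar D \<subseteq> {0} \<and> (\<forall>x\<in>Astar D. \<exists>y\<in>A'. x - y \<in> Istar D)"
    by (rule complement_exists) (use star_props[OF D] in auto)
  then show ?thesis unfolding Acomp_def by (rule someI_ex)
qed

definition "ee W = (SOME e. e \<in> G \<and> e + a1 \<in> W)"
definition "zz W = (SOME z. z \<in> Acomp (W \<inter> G) \<and> ee W - z \<in> Istar (W \<inter> G))"

lemma WM_eq: "W \<inter> M = {x\<in>U \<inter> W. \<alpha> x = 0}" by (auto simp: M_def)
lemma WH_eq: "W \<inter> H = {x\<in>V \<inter> W. \<beta> x = 0}" by (auto simp: H_def)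

lemma dimWM: "vec.subspace W \<Longrightarrow> vec.dim (U \<inter> W) \<le> vec.dim (W \<inter> M) + 1"
  unfolding WM_eq by (rule dim_ker_bound[OF vec.subspace_inter[OF sU] la])
lemma dimWH: "vec.subspace W \<Longrightarrow> vec.dim (V \<inter> W) \<le> vec.dim (W \<inter> H) + 1"
  unfolding WH_eq by (rule dim_ker_bound[OF vec.subspace_inter[OF sV] lb])

lemma exists_m:
  assumes W: "vec.subspace W" and lt: "vec.dim (W \<inter> M) < vec.dim (U \<inter> W)"
  shows "\<exists>m\<in>M. m + a1 \<in> W"
proof -
  have "\<not> (\<forall>x\<in>U \<inter> W. \<alpha> x = 0)"
  proof
    assume "\<forall>x\<in>U \<inter> W. \<alpha> x = 0"
    then have "W \<inter> M = U \<inter> W" unfolding WM_eq by auto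
    then show False using lt by simp
  qed
  then obtain w where w: "w \<in> U" "w \<in> W" "\<alpha> w \<noteq> 0" by auto
  define m where "m = (1 / \<alpha> w) *s w - a1"
  have "m \<in> U" unfolding m_def using w a1U sU by (simp add: vec.subspace_diff vec.subspace_scale)
  moreover have "\<alpha> m = 0" unfolding m_def using w aa by (simp add: la_diff la_scale)
  moreover have "m + a1 \<in> W" unfolding m_def using w W by (simp add: vec.subspace_scale)
  ultimately show ?thesis by (auto simp: M_def)
qed

lemma exists_h:
  assumes W: "vec.subspace W" and lt: "vec.dim (W \<inter> H) < vec.dim (V \<inter> W)"
  shows "\<exists>h\<in>H. h + b1 \<in> W"
proof -
  have "\<not> (\<forall>x\<in>V \<inter> W. \<beta> x = 0)"
  proof
    assume "\<forall>x\<in>V \<inter> W. \<beta> x = 0"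
    then have "W \<inter> H = V \<inter> W" unfolding WH_eq by auto
    then show False using lt by simp
  qed
  then obtain w where w: "w \<in> V" "w \<in> W" "\<beta> w \<noteq> 0" by auto
  define m where "m = (1 / \<beta> w) *s w - b1"
  have "m \<in> V" unfolding m_def using w b1V sV by (simp add: vec.subspace_diff vec.subspace_scale)
  moreover have "\<beta> m = 0" unfolding m_def using w bb by (simp add: lb_diff lb_scale)
  moreover have "m + b1 \<in> W" unfolding m_def using w W by (simp add: vec.subspace_scale)
  ultimately show ?thesis by (auto simp: H_def)
qed

lemma h_a1_dim:
  assumes W: "vec.subspace W" and h: "h \<in> H" and hw: "h + a1 \<in> W"
  shows "vec.dim (W \<inter> H) + 1 \<le> vec.dim (V' \<inter> W)"
proof (rule dim_insert_ge[OF vec.subspace_inter[OF W sH]])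
  have "\<alpha> h = 0" using h H_G by (auto simp: G_def)
  then have "\<alpha> (h + a1) = 1" using aa by (simp add: la_add)
  then show "h + a1 \<notin> W \<inter> H" using H_G by (auto simp: G_def)
  have "h + a1 \<in> V'" unfolding V'_mem by (rule exI[of _ 1]) (use h in simp)
  then show "insert (h + a1) (W \<inter> H) \<subseteq> V' \<inter> W" using hw H_V' by auto
qed

lemma m_a1_dim:
  assumes W: "vec.subspace W" and m: "m \<in> M" and mw: "m + a1 \<in> W"
  shows "vec.dim (W \<inter> M) + 1 \<le> vec.dim (U \<inter> W)"
proof (rule dim_insert_ge[OF vec.subspace_inter[OF W sM]])
  have "\<alpha> (m + a1) = 1" using m aa by (simp add: la_add M_def)
  then show "m + a1 \<notin> W \<inter> M" by (auto simp: M_def)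
  have "m + a1 \<in> U" using m a1U sU M_U by (auto intro: vec.subspace_add)
  then show "insert (m + a1) (W \<inter> M) \<subseteq> U \<inter> W" using mw M_U by auto
qed


definition "cl3 ka kb W \<longleftrightarrow> W \<in> Grass r \<and> ka \<le> vec.dim (U \<inter> W) \<and> kb \<le> vec.dim (V \<inter> W)
   \<and> vec.dim (W \<inter> M) < ka \<and> vec.dim (V' \<inter> W) < kb"

lemma cl3_basic:
  assumes "cl3 ka kb W"
  shows "vec.subspace W" "ka \<le> vec.dim (W \<inter> M) + 1" "kb \<le> vec.dim (W \<inter> H) + 1"
    "vec.dim (W \<inter> H) < kb" "\<exists>m\<in>M. m + a1 \<in> W" "\<exists>h\<in>H. h + b1 \<in> W"
    "\<not> (\<exists>h\<in>H. h + a1 \<in> W)"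
proof -
  show sW: "vec.subspace W" using assms by (simp add: cl3_def Grass_def)
  show "ka \<le> vec.dim (W \<inter> M) + 1" using assms dimWM[OF sW] by (simp add: cl3_def)
  show "kb \<le> vec.dim (W \<inter> H) + 1" using assms dimWH[OF sW] by (simp add: cl3_def)
  have "vec.dim (W \<inter> H) \<le> vec.dim (V' \<inter> W)" by (rule vec.dim_subset) (use H_V' in auto)
  then show lt: "vec.dim (W \<inter> H) < kb" using assms by (simp add: cl3_def)
  show "\<exists>m\<in>M. m + a1 \<in> W" by (rule exists_m[OF sW]) (use assms in \<open>simp add: cl3_def\<close>)
  show "\<exists>h\<in>H. h + b1 \<in> W" by (rule exists_h[OF sW]) (use assms lt in \<open>simp add: cl3_def\<close>)
  show "\<not> (\<exists>h\<in>H. h + a1 \<in> W)"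
  proof
    assume "\<exists>h\<in>H. h + a1 \<in> W"
    then obtain h where "h \<in> H" "h + a1 \<in> W" by auto
    from h_a1_dim[OF sW this] assms dimWH[OF sW] show False by (simp add: cl3_def)
  qed
qed

lemma sD: "vec.subspace W \<Longrightarrow> vec.subspace (W \<inter> G)"
  by (rule vec.subspace_inter[OF _ sG])

lemma cl3_ee:
  assumes "cl3 ka kb W"
  shows "ee W \<in> G" "ee W + a1 \<in> W" "ee W \<in> Astar (W \<inter> G)"
proof -
  obtain m where m: "m \<in> M" "m + a1 \<in> W" using cl3_basic(5)[OF assms] by auto
  have "m \<in> G" using m M_G by auto
  then have "\<exists>e. e \<in> G \<and> e + a1 \<in> W" using m by auto
  then have e: "ee W \<in> G \<and> ee W + a1 \<in> W" unfolding ee_def by (rule someI_ex)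
  then show "ee W \<in> G" "ee W + a1 \<in> W" by auto
  have sW: "vec.subspace W" using cl3_basic(1)[OF assms] .
  have "ee W - m = (ee W + a1) - (m + a1)" by simp
  also have "\<dots> \<in> W" by (rule vec.subspace_diff[OF sW]) (use e m in auto)
  finally have "ee W - m \<in> W" .
  moreover have "ee W - m \<in> G" using e \<open>m \<in> G\<close> by (simp add: vec.subspace_diff[OF sG])
  ultimately have "ee W - m \<in> W \<inter> G" by simp
  then have "m + (ee W - m) \<in> Astar (W \<inter> G)" unfolding Astar_def using m(1) by (rule sub_sum_memI[rotated])
  then show "ee W \<in> Astar (W \<inter> G)" by simp
qed

lemma cl3_zz:
  assumes "cl3 ka kb W"
  shows "zz W \<in> Acomp (W \<inter> G)" "ee W - zz W \<in> Istar (W \<inter> G)" "zz W \<in> G"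
proof -
  have sW: "vec.subspace W" using cl3_basic(1)[OF assms] .
  have D: "vec.subspace (W \<inter> G)" "W \<inter> G \<subseteq> G" using sD[OF sW] by auto
  have "\<exists>z. z \<in> Acomp (W \<inter> G) \<and> ee W - z \<in> Istar (W \<inter> G)"
    using Acomp_spec[OF D] cl3_ee(3)[OF assms] by blast
  then have z: "zz W \<in> Acomp (W \<inter> G) \<and> ee W - zz W \<in> Istar (W \<inter> G)"
    unfolding zz_def by (rule someI_ex)
  then show "zz W \<in> Acomp (W \<inter> G)" "ee W - zz W \<in> Istar (W \<inter> G)" by auto
  then show "zz W \<in> G" using Acomp_spec[OF D] star_props(6)[OF D] by blast
qed


lemma tau_e_a1: "e \<in> G \<Longrightarrow> \<tau> z (e + a1) = (e - z) + a1"
  by (simp add: \<tau>_def la_add lb_add aa ab_a1 G_def algebra_simps)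

lemma tau_g_b1: "g \<in> G \<Longrightarrow> \<tau> z (g + b1) = (g + z) + b1"
  by (simp add: \<tau>_def la_add lb_add bb ab_b1 G_def algebra_simps)

lemma cl3_img:
  assumes c: "cl3 ka kb W"
  defines "X \<equiv> \<tau> (zz W) ` W"
  shows "X \<in> Grass r" "X \<inter> G = W \<inter> G" "X \<inter> M = W \<inter> M" "ka \<le> vec.dim (U \<inter> X)"
    "kb \<le> vec.dim (V' \<inter> X)"
proof -
  let ?z = "zz W" and ?e = "ee W" and ?D = "W \<inter> G"
  have WG: "W \<in> Grass r" using c by (simp add: cl3_def)
  have sW: "vec.subspace W" using cl3_basic(1)[OF c] .
  have zG: "?z \<in> G" using cl3_zz(3)[OF c] .
  have D: "vec.subspace ?D" "?D \<subseteq> G" using sD[OF sW] by auto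
  show XG: "X \<in> Grass r" unfolding X_def by (rule lin_img_Grass[OF lin_tau inj_tau[OF zG] WG])
  have sX: "vec.subspace X" using XG by (simp add: Grass_def)
  show XD: "X \<inter> G = W \<inter> G" unfolding X_def by (rule tau_img_G[OF zG])
  have XM: "X \<inter> M = W \<inter> M" using XD M_G by blast
  then show "X \<inter> M = W \<inter> M" .
  have XH: "X \<inter> H = W \<inter> H" using XD H_G by blast
  have eX: "(?e - ?z) + a1 \<in> X"
    using tau_e_a1[OF cl3_ee(1)[OF c], of ?z] cl3_ee(2)[OF c] unfolding X_def by (metis image_eqI)
  have ez: "?e - ?z \<in> Istar ?D" by (rule cl3_zz(2)[OF c])
  have "?e - ?z \<in> Astar ?D" using ez star_props(4)[OF D] by blast
  then obtain m d where md: "m \<in> M" "d \<in> ?D" "?e - ?z = m + d" unfolding Astar_def by (rule sub_sum_memE)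
  have dX: "d \<in> X" using md(2) XD by blast
  have "m + a1 = ((?e - ?z) + a1) - d" using md(3) by (simp add: algebra_simps)
  also have "\<dots> \<in> X" by (rule vec.subspace_diff[OF sX eX dX])
  finally have "m + a1 \<in> X" .
  from m_a1_dim[OF sX md(1) this] XM cl3_basic(2)[OF c]
  show "ka \<le> vec.dim (U \<inter> X)" by simp
  have "?e - ?z \<in> Bstar ?D" using ez star_props(5)[OF D] by blast
  then obtain h d' where hd: "h \<in> H" "d' \<in> ?D" "?e - ?z = h + d'" unfolding Bstar_def by (rule sub_sum_memE)
  have dX': "d' \<in> X" using hd(2) XD by blast
  have "h + a1 = ((?e - ?z) + a1) - d'" using hd(3) by (simp add: algebra_simps)
  also have "\<dots> \<in> X" by (rule vec.subspace_diff[OF sX eX dX'])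
  finally have "h + a1 \<in> X" .
  from h_a1_dim[OF sX hd(1) this] XH cl3_basic(3)[OF c]
  show "kb \<le> vec.dim (V' \<inter> X)" by simp
qed


lemma z_zero:
  assumes D: "vec.subspace D" "D \<subseteq> G" and z: "z \<in> Acomp D" and zB: "z \<in> Bstar D"
  shows "z = 0"
proof -
  have "z \<in> Astar D" using z Acomp_spec[OF D] by blast
  then have "z \<in> Istar D" using zB by (simp add: Istar_def)
  then show ?thesis using z Acomp_spec[OF D] by blast
qed

lemma cl3_notV:
  assumes c: "cl3 ka kb W"
  shows "vec.dim (V \<inter> \<tau> (zz W) ` W) < kb"
proof -
  let ?z = "zz W" and ?e = "ee W" and ?D = "W \<inter> G" and ?X = "\<tau> (zz W) ` W"
  have sW: "vec.subspace W" using cl3_basic(1)[OF c] .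
  have zG: "?z \<in> G" using cl3_zz(3)[OF c] .
  have D: "vec.subspace ?D" "?D \<subseteq> G" using sD[OF sW] by auto
  obtain h0 where h0: "h0 \<in> H" "h0 + b1 \<in> W" using cl3_basic(6)[OF c] by auto
  have h0G: "h0 \<in> G" using h0 H_G by auto
  have sub: "V \<inter> ?X \<subseteq> W \<inter> H"
  proof
    fix x assume x: "x \<in> V \<inter> ?X"
    then obtain v where v: "v \<in> W" "x = \<tau> ?z v" by auto
    have ax: "\<alpha> x = 0" using x aV by auto
    have "\<beta> x = 0"
    proof (rule ccontr)
      assume k: "\<beta> x \<noteq> 0"
      let ?k = "\<beta> x"
      have av: "\<alpha> v = 0" using ax v alpha_tau[OF zG] by simp
      have bv: "\<beta> v = ?k" using v beta_tau[OF zG] by simp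
      let ?v = "(1 / ?k) *s v"
      have vW: "?v \<in> W" using v sW by (simp add: vec.subspace_scale)
      let ?g = "?v - b1"
      have gG: "?g \<in> G" using av bv k bb ab_b1 by (simp add: G_def la_diff lb_diff la_scale lb_scale)
      have "?g - h0 = ?v - (h0 + b1)" by (simp add: algebra_simps)
      also have "\<dots> \<in> W" by (rule vec.subspace_diff[OF sW vW h0(2)])
      finally have "?g - h0 \<in> ?D" using gG h0G vec.subspace_diff[OF sG] by simp
      then have "h0 + (?g - h0) \<in> Bstar ?D" unfolding Bstar_def using h0(1) by (rule sub_sum_memI[rotated])
      then have gB: "?g \<in> Bstar ?D" by simp
      have "\<tau> ?z ?v = (1 / ?k) *s x" using v vec.linear_scale[OF lin_tau] by simp
      then have "\<tau> ?z ?v \<in> V" using x sV by (simp add: vec.subspace_scale)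
      moreover have "\<tau> ?z ?v = (?g + ?z) + b1" using tau_g_b1[OF gG, of ?z] by simp
      ultimately have gzb: "(?g + ?z) + b1 \<in> V" by simp
      have "?g + ?z = ((?g + ?z) + b1) - b1" by simp
      also have "\<dots> \<in> V" by (rule vec.subspace_diff[OF sV gzb b1V])
      finally have "?g + ?z \<in> V" .
      moreover have "?g + ?z \<in> G" using gG zG vec.subspace_add[OF sG] by simp
      ultimately have "?g + ?z \<in> H" by (simp add: H_def G_def)
      then have "?g + ?z \<in> Bstar ?D" using star_props(9)[OF D] by blast
      then have "(?g + ?z) - ?g \<in> Bstar ?D" by (rule vec.subspace_diff[OF star_props(2)[OF D] _ gB])
      then have "?z \<in> Bstar ?D" by simp
      then have z0: "?z = 0" using z_zero[OF D cl3_zz(1)[OF c]] by simp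
      have "?e \<in> Bstar ?D" using cl3_zz(2)[OF c] z0 by (simp add: Istar_def)
      then obtain h d where hd: "h \<in> H" "d \<in> ?D" "?e = h + d" unfolding Bstar_def by (rule sub_sum_memE)
      have "h + a1 = (?e + a1) - d" using hd(3) by (simp add: algebra_simps)
      also have "\<dots> \<in> W" by (rule vec.subspace_diff[OF sW cl3_ee(2)[OF c]]) (use hd in auto)
      finally have "h + a1 \<in> W" .
      then show False using cl3_basic(7)[OF c] hd(1) by auto
    qed
    then have "x \<in> H" using x by (simp add: H_def)
    moreover have "x \<in> ?X \<inter> H" using x \<open>x \<in> H\<close> by simp
    ultimately show "x \<in> W \<inter> H" using cl3_img(2)[OF c] H_G by blast
  qed
  have "vec.dim (V \<inter> ?X) \<le> vec.dim (W \<inter> H)" using sub by (rule vec.dim_subset)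
  then show ?thesis using cl3_basic(4)[OF c] by simp
qed

lemma cl3_inj:
  assumes c1: "cl3 ka kb W1" and c2: "cl3 ka' kb' W2"
    and eq: "\<tau> (zz W1) ` W1 = \<tau> (zz W2) ` W2"
  shows "W1 = W2"
proof -
  let ?X = "\<tau> (zz W1) ` W1" and ?z1 = "zz W1" and ?z2 = "zz W2"
  have sW1: "vec.subspace W1" using cl3_basic(1)[OF c1] .
  have z1G: "?z1 \<in> G" using cl3_zz(3)[OF c1] .
  have z2G: "?z2 \<in> G" using cl3_zz(3)[OF c2] .
  have XD1: "?X \<inter> G = W1 \<inter> G" by (rule tau_img_G[OF z1G])
  have XD2: "?X \<inter> G = W2 \<inter> G" using eq tau_img_G[OF z2G, of W2] by simp
  let ?D = "W1 \<inter> G"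
  have D: "vec.subspace ?D" "?D \<subseteq> G" using sD[OF sW1] by auto
  have sX: "vec.subspace ?X" using cl3_img(1)[OF c1] by (simp add: Grass_def)
  obtain h1 where h1: "h1 \<in> H" "h1 + b1 \<in> W1" using cl3_basic(6)[OF c1] by auto
  obtain h2 where h2: "h2 \<in> H" "h2 + b1 \<in> W2" using cl3_basic(6)[OF c2] by auto
  have h1G: "h1 \<in> G" and h2G: "h2 \<in> G" using h1 h2 H_G by auto
  have x1: "(h1 + ?z1) + b1 \<in> ?X" using tau_g_b1[OF h1G, of ?z1] h1(2) by (metis image_eqI)
  have x2: "(h2 + ?z2) + b1 \<in> ?X" using tau_g_b1[OF h2G, of ?z2] h2(2) eq by (metis image_eqI)
  have "(h1 + ?z1) - (h2 + ?z2) = ((h1 + ?z1) + b1) - ((h2 + ?z2) + b1)" by simp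
  also have "\<dots> \<in> ?X" by (rule vec.subspace_diff[OF sX x1 x2])
  finally have qX: "(h1 + ?z1) - (h2 + ?z2) \<in> ?X" .
  have "(h1 + ?z1) - (h2 + ?z2) \<in> G"
    using h1G h2G z1G z2G vec.subspace_add[OF sG] vec.subspace_diff[OF sG] by simp
  then have qD: "(h1 + ?z1) - (h2 + ?z2) \<in> ?D" using qX XD1 by blast
  have "h2 - h1 \<in> H" using h1 h2 by (simp add: vec.subspace_diff[OF sH])
  then have "(h2 - h1) + ((h1 + ?z1) - (h2 + ?z2)) \<in> Bstar ?D"
    unfolding Bstar_def using qD by (rule sub_sum_memI)
  then have zB: "?z1 - ?z2 \<in> Bstar ?D" by (simp add: algebra_simps)
  have a1: "?z1 \<in> Acomp ?D" using cl3_zz(1)[OF c1] .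
  have a2: "?z2 \<in> Acomp ?D" using cl3_zz(1)[OF c2] XD1 XD2 by simp
  have "?z1 - ?z2 \<in> Acomp ?D" using a1 a2 Acomp_spec[OF D] by (simp add: vec.subspace_diff)
  then have "?z1 - ?z2 = 0" using z_zero[OF D _ zB] by simp
  then have zz: "?z1 = ?z2" by simp
  have "W1 = \<tau> (- ?z1) ` ?X" using tau_img_inv[OF z1G] by simp
  also have "\<dots> = \<tau> (- ?z2) ` (\<tau> ?z2 ` W2)" using eq zz by simp
  also have "\<dots> = W2" by (rule tau_img_inv[OF z2G])
  finally show ?thesis .
qed


definition "SS ka kb X = {W\<in>Grass r. ka \<le> vec.dim (U \<inter> W) \<and> kb \<le> vec.dim (X \<inter> W)}"
definition "Th ka kb W = (if ka \<le> vec.dim (W \<inter> M) then \<sigma> ` W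
   else if kb \<le> vec.dim (V' \<inter> W) then W else \<tau> (zz W) ` W)"

lemma sigma_M_sub: "W \<inter> M \<subseteq> \<sigma> ` W \<inter> M"
proof
  fix x assume x: "x \<in> W \<inter> M"
  then have "\<sigma> x = x" using M_G sigma_G by auto
  then show "x \<in> \<sigma> ` W \<inter> M" using x by (auto intro: image_eqI[of x _ x])
qed

lemma Th_facts:
  assumes W: "W \<in> SS ka kb V"
  shows "Th ka kb W \<in> SS ka kb V'"
    "ka \<le> vec.dim (W \<inter> M) \<Longrightarrow> ka \<le> vec.dim (Th ka kb W \<inter> M)"
    "\<not> ka \<le> vec.dim (W \<inter> M) \<Longrightarrow> Th ka kb W \<inter> M = W \<inter> M"
    "\<not> ka \<le> vec.dim (W \<inter> M) \<Longrightarrow> kb \<le> vec.dim (V' \<inter> W) \<Longrightarrow> kb \<le> vec.dim (V \<inter> Th ka kb W)"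
    "\<not> ka \<le> vec.dim (W \<inter> M) \<Longrightarrow> \<not> kb \<le> vec.dim (V' \<inter> W) \<Longrightarrow> vec.dim (V \<inter> Th ka kb W) < kb"
proof -
  have WG: "W \<in> Grass r" and Wu: "ka \<le> vec.dim (U \<inter> W)" and Wv: "kb \<le> vec.dim (V \<inter> W)"
    using W by (auto simp: SS_def)
  have sW: "vec.subspace W" using WG by (simp add: Grass_def)
  have c3: "cl3 ka kb W" if "\<not> ka \<le> vec.dim (W \<inter> M)" "\<not> kb \<le> vec.dim (V' \<inter> W)"
    using that WG Wu Wv by (simp add: cl3_def)
  have dsig: "vec.dim (\<sigma> ` W \<inter> M) \<ge> vec.dim (W \<inter> M)" by (rule vec.dim_subset[OF sigma_M_sub])
  show "ka \<le> vec.dim (W \<inter> M) \<Longrightarrow> ka \<le> vec.dim (Th ka kb W \<inter> M)"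
    using dsig by (simp add: Th_def)
  show "\<not> ka \<le> vec.dim (W \<inter> M) \<Longrightarrow> Th ka kb W \<inter> M = W \<inter> M"
    using cl3_img(3)[OF c3] by (auto simp: Th_def)
  show "\<not> ka \<le> vec.dim (W \<inter> M) \<Longrightarrow> kb \<le> vec.dim (V' \<inter> W) \<Longrightarrow> kb \<le> vec.dim (V \<inter> Th ka kb W)"
    using Wv by (simp add: Th_def)
  show "\<not> ka \<le> vec.dim (W \<inter> M) \<Longrightarrow> \<not> kb \<le> vec.dim (V' \<inter> W) \<Longrightarrow> vec.dim (V \<inter> Th ka kb W) < kb"
    using cl3_notV[OF c3] by (simp add: Th_def)
  show "Th ka kb W \<in> SS ka kb V'"
  proof (cases "ka \<le> vec.dim (W \<inter> M)")
    case True
    have G1: "\<sigma> ` W \<in> Grass r" by (rule lin_img_Grass[OF lin_sigma inj_sigma WG])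
    have "vec.dim (\<sigma> ` W \<inter> M) \<le> vec.dim (U \<inter> \<sigma> ` W)" by (rule vec.dim_subset) (use M_U in auto)
    then have "ka \<le> vec.dim (U \<inter> \<sigma> ` W)" using True dsig by simp
    moreover have "V' \<inter> \<sigma> ` W = \<sigma> ` (V \<inter> W)" using sigma_V inj_sigma by (simp add: image_Int)
    then have "vec.dim (V' \<inter> \<sigma> ` W) = vec.dim (V \<inter> W)" using lin_img_dim[OF lin_sigma inj_sigma] by simp
    ultimately show ?thesis using True G1 Wv by (simp add: Th_def SS_def)
  next
    case False
    note F = False
    show ?thesis
    proof (cases "kb \<le> vec.dim (V' \<inter> W)")
      case True
      then show ?thesis using F WG Wu by (simp add: Th_def SS_def)
    next
      case False
      have c: "cl3 ka kb W" by (rule c3[OF F False])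
      show ?thesis using cl3_img(1,4,5)[OF c] F False by (simp add: Th_def SS_def)
    qed
  qed
qed

lemma count_le: "card (SS ka kb V) \<le> card (SS ka kb V')"
proof (rule card_inj_on_le[of "Th ka kb"])
  show "finite (SS ka kb V')" by (rule finite_setset)
  show "Th ka kb ` SS ka kb V \<subseteq> SS ka kb V'" using Th_facts(1) by blast
  show "inj_on (Th ka kb) (SS ka kb V)"
  proof (rule inj_onI)
    fix W1 W2 assume W1: "W1 \<in> SS ka kb V" and W2: "W2 \<in> SS ka kb V" and eq: "Th ka kb W1 = Th ka kb W2"
    have G1: "W1 \<in> Grass r" "ka \<le> vec.dim (U \<inter> W1)" "kb \<le> vec.dim (V \<inter> W1)" using W1 by (auto simp: SS_def)
    have G2: "W2 \<in> Grass r" "ka \<le> vec.dim (U \<inter> W2)" "kb \<le> vec.dim (V \<inter> W2)" using W2 by (auto simp: SS_def)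
    consider (c1) "ka \<le> vec.dim (W1 \<inter> M)" | (c2) "\<not> ka \<le> vec.dim (W1 \<inter> M)" "kb \<le> vec.dim (V' \<inter> W1)"
      | (c3) "\<not> ka \<le> vec.dim (W1 \<inter> M)" "\<not> kb \<le> vec.dim (V' \<inter> W1)" by blast
    note A = this
    consider (d1) "ka \<le> vec.dim (W2 \<inter> M)" | (d2) "\<not> ka \<le> vec.dim (W2 \<inter> M)" "kb \<le> vec.dim (V' \<inter> W2)"
      | (d3) "\<not> ka \<le> vec.dim (W2 \<inter> M)" "\<not> kb \<le> vec.dim (V' \<inter> W2)" by blast
    note B = this
    show "W1 = W2"
    proof (cases rule: A)
      case c1
      show ?thesis
      proof (cases rule: B)
        case d1
        then have "\<sigma> ` W1 = \<sigma> ` W2" using c1 eq by (simp add: Th_def)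
        then show ?thesis using inj_sigma by (simp add: inj_image_eq_iff)
      next
        case d2
        then show ?thesis using Th_facts(2)[OF W1 c1] Th_facts(3)[OF W2] eq by simp
      next
        case d3
        then show ?thesis using Th_facts(2)[OF W1 c1] Th_facts(3)[OF W2] eq by simp
      qed
    next
      case c2
      show ?thesis
      proof (cases rule: B)
        case d1
        then show ?thesis using Th_facts(2)[OF W2 d1] Th_facts(3)[OF W1] c2 eq by simp
      next
        case d2
        then show ?thesis using c2 eq by (simp add: Th_def)
      next
        case d3
        then show ?thesis using Th_facts(4)[OF W1 c2] Th_facts(5)[OF W2 d3] eq by simp
      qed
    next
      case c3
      show ?thesis
      proof (cases rule: B)
        case d1
        then show ?thesis using Th_facts(2)[OF W2 d1] Th_facts(3)[OF W1] c3 eq by simp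
      next
        case d2
        then show ?thesis using Th_facts(4)[OF W2 d2] Th_facts(5)[OF W1 c3] eq by simp
      next
        case d3
        have cc1: "cl3 ka kb W1" using c3 G1 by (simp add: cl3_def)
        have cc2: "cl3 ka kb W2" using d3 G2 by (simp add: cl3_def)
        have "\<tau> (zz W1) ` W1 = \<tau> (zz W2) ` W2" using c3 d3 eq by (simp add: Th_def)
        then show ?thesis by (rule cl3_inj[OF cc1 cc2])
      qed
    qed
  qed
qed

end



lemma step:
  fixes U V :: "('a::{field,finite} ^ 'n) set"
  assumes UG: "U \<in> Grass r" and VG: "V \<in> Grass r" and lt: "vec.dim (U \<inter> V) < r"
  shows "\<exists>V'. V' \<in> Grass r \<and> vec.dim (U \<inter> V') = vec.dim (U \<inter> V) + 1 \<and>
     card (ball_I r u U \<inter> ball_I r s V) \<le> card (ball_I r u U \<inter> ball_I r s V')"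
proof -
  have sU: "vec.subspace U" and sV: "vec.subspace V" and dU: "vec.dim U = r" and dV: "vec.dim V = r"
    using UG VG by (auto simp: Grass_def)
  have "\<not> U \<subseteq> V"
  proof
    assume "U \<subseteq> V" then have "U \<inter> V = U" by auto
    then show False using lt dU by simp
  qed
  then obtain a1 where a1: "a1 \<in> U" "a1 \<notin> V" by auto
  have "\<not> V \<subseteq> U"
  proof
    assume "V \<subseteq> U" then have "U \<inter> V = V" by auto
    then show False using lt dV by simp
  qed
  then obtain b1 where b1: "b1 \<in> V" "b1 \<notin> U" by auto
  obtain \<alpha> where al: "lfun \<alpha>" "\<forall>v\<in>V. \<alpha> v = 0" "\<alpha> a1 = 1" using lfun_exists[OF sV a1(2)] by auto
  obtain \<beta> where be: "lfun \<beta>" "\<forall>v\<in>U. \<beta> v = 0" "\<beta> b1 = 1" using lfun_exists[OF sU b1(2)] by auto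
  interpret c: cfg U V r \<alpha> \<beta> a1 b1
    by unfold_locales (use UG VG al be a1 b1 in auto)
  have eqS: "ball_I r u U \<inter> ball_I r s X = c.SS (r - u) (r - s) X" if "X \<in> Grass r" for X
    using ball_I_mem[OF UG] ball_I_mem[OF that] by (auto simp: c.SS_def)
  show ?thesis
  proof (intro exI conjI)
    show "c.V' \<in> Grass r" by (rule c.V'G)
    show "vec.dim (U \<inter> c.V') = vec.dim (U \<inter> V) + 1" by (rule c.dim_UV')
    show "card (ball_I r u U \<inter> ball_I r s V) \<le> card (ball_I r u U \<inter> ball_I r s c.V')"
      using eqS[OF VG] eqS[OF c.V'G] c.count_le by simp
  qed
qed

theorem proposition4:
  fixes U V U' V' :: "('a::{field,finite}, 'n::finite) vec set"
  assumes "r \<le> CARD('n) div 2"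
    and "u \<le> r" and "s \<le> r"
    and "1 \<le> d" and "d \<le> r"
    and "U \<in> Grass r" and "V \<in> Grass r" and "inj_dist U V = d"
    and "U' \<in> Grass r" and "V' \<in> Grass r" and "inj_dist U' V' = d - 1"
  shows "card (ball_I r u U \<inter> ball_I r s V) \<le> card (ball_I r u U' \<inter> ball_I r s V')"
proof -
  have d1: "r - vec.dim (U \<inter> V) = d" using inj_dist_Grass[OF assms(6,7)] assms(8) by simp
  have le1: "vec.dim (U \<inter> V) \<le> r" by (rule Grass_dim_Int_le[OF assms(6)])
  have d2: "r - vec.dim (U' \<inter> V') = d - 1" using inj_dist_Grass[OF assms(9,10)] assms(11) by simp
  have le2: "vec.dim (U' \<inter> V') \<le> r" by (rule Grass_dim_Int_le[OF assms(9)])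
  have lt: "vec.dim (U \<inter> V) < r" using d1 le1 assms(4) by linarith
  obtain W where W: "W \<in> Grass r" "vec.dim (U \<inter> W) = vec.dim (U \<inter> V) + 1"
    "card (ball_I r u U \<inter> ball_I r s V) \<le> card (ball_I r u U \<inter> ball_I r s W)"
    using step[OF assms(6,7) lt, of u s] by blast
  have "vec.dim (U \<inter> W) = vec.dim (U' \<inter> V')" using W(2) d1 d2 le1 le2 assms(4,5) by linarith
  then have "card (ball_I r u U \<inter> ball_I r s W) \<le> card (ball_I r u U' \<inter> ball_I r s V')"
    by (rule card_same_dist[OF assms(6) W(1) assms(9,10)])
  then show ?thesis using W(3) by simp
qed


end
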